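(* Let $P$ be a monotone irreducible positive recurrent stochastic kernel on $\mathbb{N}=\{1,2,\dots\}$ with stationary distribution $\pi$. Let $X=(X_n)_{n\ge0}$ be the Markov chain with kernel $P$ and, for $N\ge1$, $\tau_{(N)}=\inf\{n\ge 0: X_n\ge N\}$. Then $$\forall\, y,z\in\mathbb{N}:\quad \lim_{n,N\to\infty}\frac{\mathbb{P}_y(\tau_{(N)}>n)}{\mathbb{P}_z(\tau_{(N)}>n)}=1,$$ where the limit is taken jointly as both $n\to\infty$ and $N\to\infty$.
   Context: A stochastic kernel $P$ on $\mathbb{N}$ is monotone if for every $y\in\mathbb{N}$ the map $x\mapsto\sum_{z\le y}P(x,z)$ is decreasing in $x$. $\mathbb{P}_x$ denotes the law of the chain started at $x$. The stationary distribution $\pi$ satisfies $\pi(i)>0$, $\sum_i\pi(i)=1$, $\pi' P=\pi'$. *)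

theory Defs
  imports "HOL-Analysis.Analysis"
begin

text \<open>State space is the positive naturals {1,2,...}, modelled as the subset
  {1..} of type nat.  A kernel is a function P :: nat => nat => real; only its
  values on {1..} x {1..} matter.\<close>

definition stochastic_kernel :: "(nat \<Rightarrow> nat \<Rightarrow> real) \<Rightarrow> bool" where
  "stochastic_kernel P \<longleftrightarrow>
     (\<forall>x\<ge>1. \<forall>z\<ge>1. P x z \<ge> 0) \<and> (\<forall>x\<ge>1. (P x has_sum 1) {1..})"

definition monotone_kernel :: "(nat \<Rightarrow> nat \<Rightarrow> real) \<Rightarrow> bool" where
  "monotone_kernel P \<longleftrightarrow>
     (\<forall>y\<ge>1. \<forall>x x'. 1 \<le> x \<longrightarrow> x \<le> x' \<longrightarrow> (\<Sum>z\<in>{1..y}. P x' z) \<le> (\<Sum>z\<in>{1..y}. P x z))"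

fun kpow :: "(nat \<Rightarrow> nat \<Rightarrow> real) \<Rightarrow> nat \<Rightarrow> nat \<Rightarrow> nat \<Rightarrow> real" where
  "kpow P 0 x y = (if x = y then 1 else 0)"
| "kpow P (Suc n) x y = infsum (\<lambda>z. P x z * kpow P n z y) {1..}"

definition irreducible_kernel :: "(nat \<Rightarrow> nat \<Rightarrow> real) \<Rightarrow> bool" where
  "irreducible_kernel P \<longleftrightarrow> (\<forall>x\<ge>1. \<forall>y\<ge>1. \<exists>n. kpow P n x y > 0)"

fun first_pass :: "(nat \<Rightarrow> nat \<Rightarrow> real) \<Rightarrow> nat \<Rightarrow> nat \<Rightarrow> nat \<Rightarrow> real" where
  "first_pass P 0 x y = 0"
| "first_pass P (Suc 0) x y = P x y"
| "first_pass P (Suc (Suc n)) x y = infsum (\<lambda>z. P x z * first_pass P (Suc n) z y) ({1..} - {y})"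

text \<open>Positive recurrence: every state x is recurrent (P_x(T_x < \<infinity>) = 1) and has
  finite mean return time E_x[T_x] < \<infinity>, where T_x = inf{n \<ge> 1 : X_n = x}.\<close>
definition positive_recurrent :: "(nat \<Rightarrow> nat \<Rightarrow> real) \<Rightarrow> bool" where
  "positive_recurrent P \<longleftrightarrow>
     (\<forall>x\<ge>1. ((\<lambda>n. first_pass P n x x) has_sum 1) UNIV \<and>
             (\<lambda>n. real n * first_pass P n x x) summable_on UNIV)"

definition stationary_distribution :: "(nat \<Rightarrow> nat \<Rightarrow> real) \<Rightarrow> (nat \<Rightarrow> real) \<Rightarrow> bool" where
  "stationary_distribution P \<pi> \<longleftrightarrow>
     (\<forall>i\<ge>1. \<pi> i > 0) \<and> (\<pi> has_sum 1) {1..} \<and>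
     (\<forall>j\<ge>1. ((\<lambda>i. \<pi> i * P i j) has_sum \<pi> j) {1..})"

text \<open>surv P N n y = P_y(\<tau>_(N) > n) where \<tau>_(N) = inf{n \<ge> 0 : X_n \<ge> N},
  i.e. the probability that X_0, ..., X_n all lie in {1..<N}.\<close>
fun surv :: "(nat \<Rightarrow> nat \<Rightarrow> real) \<Rightarrow> nat \<Rightarrow> nat \<Rightarrow> nat \<Rightarrow> real" where
  "surv P N 0 y = (if y < N then 1 else 0)"
| "surv P N (Suc n) y = (if y < N then (\<Sum>z\<in>{1..<N}. P y z * surv P N n z) else 0)"

end

theory Submission
  imports Defs
begin

fun hh :: "(nat \<Rightarrow> nat \<Rightarrow> real) \<Rightarrow> nat \<Rightarrow> nat \<Rightarrow> nat \<Rightarrow> nat \<Rightarrow> real" where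
  "hh P b N 0 x = (if x \<le> b then 1 else 0)"
| "hh P b N (Suc k) x = (if x \<le> b then 1 else if x < N then (\<Sum>w\<in>{1..<N}. P x w * hh P b N k w) else 0)"

fun qq :: "(nat \<Rightarrow> nat \<Rightarrow> real) \<Rightarrow> nat \<Rightarrow> nat \<Rightarrow> nat \<Rightarrow> real" where
  "qq P b 0 x = (if x \<le> b then 0 else 1)"
| "qq P b (Suc k) x = (if x \<le> b then 0 else infsum (\<lambda>w. P x w * qq P b k w) {1..})"

definition Pq :: "(nat \<Rightarrow> nat \<Rightarrow> real) \<Rightarrow> nat \<Rightarrow> nat \<Rightarrow> nat \<Rightarrow> real" where
  "Pq P b k x = infsum (\<lambda>w. P x w * qq P b k w) {1..}"

lemma infsum_finite_sum:
  fixes g :: "'a \<Rightarrow> 'b \<Rightarrow> real"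
  assumes "finite X" "\<And>x. x \<in> X \<Longrightarrow> g x summable_on A"
  shows "(\<Sum>x\<in>X. infsum (g x) A) = infsum (\<lambda>w. \<Sum>x\<in>X. g x w) A
       \<and> (\<lambda>w. \<Sum>x\<in>X. g x w) summable_on A"
  using assms
proof (induction X rule: finite_induct)
  case empty then show ?case by simp
next
  case (insert x F)
  then show ?case by (simp add: infsum_add summable_on_add)
qed

locale mc =
  fixes P :: "nat \<Rightarrow> nat \<Rightarrow> real"
  assumes Pnn: "\<And>x z. x \<ge> 1 \<Longrightarrow> z \<ge> 1 \<Longrightarrow> P x z \<ge> 0"
    and Prow: "\<And>x. x \<ge> 1 \<Longrightarrow> (P x has_sum 1) {1..}"
    and Pmono: "\<And>y x x'. y \<ge> 1 \<Longrightarrow> 1 \<le> x \<Longrightarrow> x \<le> x' \<Longrightarrow> (\<Sum>z\<in>{1..y}. P x' z) \<le> (\<Sum>z\<in>{1..y}. P x z)"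
begin

lemma Psum_le1: "x \<ge> 1 \<Longrightarrow> finite F \<Longrightarrow> F \<subseteq> {1..} \<Longrightarrow> (\<Sum>z\<in>F. P x z) \<le> 1"
  by (rule finite_sum_le_has_sum[OF Prow]) (auto intro: Pnn)

lemma Psummable: "x \<ge> 1 \<Longrightarrow> P x summable_on {1..}"
  using Prow has_sum_imp_summable by blast

lemma surv_nn: "y \<ge> 1 \<Longrightarrow> surv P N n y \<ge> 0"
  by (induction n arbitrary: y) (auto intro!: sum_nonneg mult_nonneg_nonneg Pnn)

lemma surv_le1: "y \<ge> 1 \<Longrightarrow> surv P N (Suc n) y \<le> surv P N n y"
proof (induction n arbitrary: y)
  case 0
  have "{1..<N} \<subseteq> {1::nat..}" by auto
  then show ?case using Psum_le1[of y "{1..<N}"] 0 by auto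
next
  case (Suc n)
  have "(\<Sum>z\<in>{1..<N}. P y z * surv P N (Suc n) z) \<le> (\<Sum>z\<in>{1..<N}. P y z * surv P N n z)"
    using Suc by (auto intro!: sum_mono mult_left_mono Pnn surv_nn simp del: surv.simps(2))
  then show ?case by (subst (1 2) surv.simps(2)) simp
qed

lemma abel:
  fixes p p' g :: "nat \<Rightarrow> real"
  assumes "\<And>j. j \<le> m \<Longrightarrow> (\<Sum>z\<in>{1..j}. p' z) \<le> (\<Sum>z\<in>{1..j}. p z)"
    and "\<And>i j. 1 \<le> i \<Longrightarrow> i \<le> j \<Longrightarrow> j \<le> m \<Longrightarrow> g j \<le> g i"
    and "\<And>j. 1 \<le> j \<Longrightarrow> j \<le> m \<Longrightarrow> g j \<ge> 0"
  shows "(\<Sum>z\<in>{1..m}. (p z - p' z) * g z) \<ge> ((\<Sum>z\<in>{1..m}. p z) - (\<Sum>z\<in>{1..m}. p' z)) * g m"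
  using assms
proof (induction m)
  case 0 then show ?case by simp
next
  case (Suc m)
  define D where "D j = (\<Sum>z\<in>{1..j}. p z) - (\<Sum>z\<in>{1..j}. p' z)" for j
  have IH: "(\<Sum>z\<in>{1..m}. (p z - p' z) * g z) \<ge> D m * g m"
    using Suc.IH Suc.prems unfolding D_def by auto
  have D: "D (Suc m) = D m + (p (Suc m) - p' (Suc m))" unfolding D_def by simp
  have Dm: "D m \<ge> 0" using Suc.prems(1)[of m] unfolding D_def by simp
  have gm: "g (Suc m) \<le> g m" if "m \<ge> 1" using Suc.prems(2)[of m "Suc m"] that by simp
  have "(\<Sum>z\<in>{1..Suc m}. (p z - p' z) * g z) = (\<Sum>z\<in>{1..m}. (p z - p' z) * g z) + (p (Suc m) - p' (Suc m)) * g (Suc m)"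
    by simp
  also have "\<dots> \<ge> D m * g m + (p (Suc m) - p' (Suc m)) * g (Suc m)" using IH by simp
  also have "D m * g m \<ge> D m * g (Suc m)"
  proof (cases "m \<ge> 1")
    case True then show ?thesis using gm Dm by (simp add: mult_left_mono)
  next
    case False then show ?thesis by (simp add: D_def)
  qed
  hence "D m * g m + (p (Suc m) - p' (Suc m)) * g (Suc m) \<ge> D (Suc m) * g (Suc m)"
    by (simp add: D algebra_simps)
  finally show ?case unfolding D_def by simp
qed

lemma surv_mono:
  assumes "1 \<le> x" "x \<le> x'"
  shows "surv P N n x' \<le> surv P N n x"
  using assms
proof (induction n arbitrary: x x')
  case 0 then show ?case by auto
next
  case (Suc n)
  show ?case
  proof (cases "x' < N")
    case False
    then show ?thesis using surv_nn[of x N "Suc n"] Suc.prems by simp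
  next
    case True
    define m where "m = N - 1"
    have m1: "m \<ge> 1" "x' \<le> m" using True Suc.prems unfolding m_def by auto
    have N: "{1..<N} = {1..m}" unfolding m_def using True by auto
    have ab: "(\<Sum>z\<in>{1..m}. (P x z - P x' z) * surv P N n z) \<ge>
       ((\<Sum>z\<in>{1..m}. P x z) - (\<Sum>z\<in>{1..m}. P x' z)) * surv P N n m"
    proof (rule abel)
      fix j assume "j \<le> m"
      show "(\<Sum>z\<in>{1..j}. P x' z) \<le> (\<Sum>z\<in>{1..j}. P x z)"
      proof (cases "j \<ge> 1")
        case True then show ?thesis using Pmono[of j x x'] Suc.prems by simp
      qed simp
    next
      fix i j assume "1 \<le> i" "i \<le> j" "j \<le> m"
      then show "surv P N n j \<le> surv P N n i" using Suc.IH by simp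
    next
      fix j :: nat assume "1 \<le> j" "j \<le> m"
      then show "surv P N n j \<ge> 0" using surv_nn by simp
    qed
    have "((\<Sum>z\<in>{1..m}. P x z) - (\<Sum>z\<in>{1..m}. P x' z)) * surv P N n m \<ge> 0"
      using Pmono[of m x x'] Suc.prems m1 surv_nn[of m N n] by (intro mult_nonneg_nonneg) auto
    with ab have "(\<Sum>z\<in>{1..m}. P x' z * surv P N n z) \<le> (\<Sum>z\<in>{1..m}. P x z * surv P N n z)"
      by (simp add: algebra_simps sum_subtractf)
    moreover have "x < N" using True Suc.prems by simp
    ultimately show ?thesis using True unfolding surv.simps(2) N by simp
  qed
qed

lemma hh_nn: "hh P b N k x \<ge> 0"
  by (induction k arbitrary: x) (auto intro!: sum_nonneg mult_nonneg_nonneg Pnn)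

lemma surv_dec: "y \<ge> 1 \<Longrightarrow> m \<le> n \<Longrightarrow> surv P N n y \<le> surv P N m y"
proof (induction n)
  case 0 then show ?case by simp
next
  case (Suc n)
  then show ?case using surv_le1[of y N n] by (cases "m = Suc n") auto
qed

lemma lemA:
  assumes "b \<ge> 1"
  shows "k \<le> n \<Longrightarrow> x \<ge> 1 \<Longrightarrow> hh P b N k x * surv P N n b \<le> surv P N n x"
proof (induction k arbitrary: n x)
  case 0
  then show ?case using surv_mono[of x b N n] surv_nn[of x N n] by auto
next
  case (Suc k)
  then obtain m where n: "n = Suc m" and km: "k \<le> m" by (cases n) auto
  show ?case
  proof (cases "x \<le> b")
    case True then show ?thesis using surv_mono[of x b N n] Suc.prems by auto
  next
    case xb: False
    show ?thesis
    proof (cases "x < N")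
      case False then show ?thesis using xb surv_nn[of x N n] Suc.prems by auto
    next
      case True
      have "hh P b N (Suc k) x * surv P N n b \<le> hh P b N (Suc k) x * surv P N m b"
        unfolding n by (rule mult_left_mono[OF surv_le1[OF assms] hh_nn])
      also have "\<dots> = (\<Sum>w\<in>{1..<N}. P x w * (hh P b N k w * surv P N m b))"
        using xb True by (simp add: sum_distrib_right mult.assoc)
      also have "\<dots> \<le> (\<Sum>w\<in>{1..<N}. P x w * surv P N m w)"
        using Suc.IH[OF km] Suc.prems by (intro sum_mono mult_left_mono Pnn) auto
      also have "\<dots> = surv P N n x" using n True by simp
      finally show ?thesis .
    qed
  qed
qed

lemma PF_summable:
  assumes "x \<ge> 1" "\<And>w. w \<ge> 1 \<Longrightarrow> 0 \<le> f w \<and> f w \<le> 1"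
  shows "(\<lambda>w. P x w * f w) summable_on {1..}"
  by (rule summable_on_comparison_test[OF Psummable[OF assms(1)]])
     (use assms Pnn in \<open>auto intro: mult_nonneg_nonneg mult_left_le\<close>)

lemma PF_bounds:
  assumes "x \<ge> 1" "\<And>w. w \<ge> 1 \<Longrightarrow> 0 \<le> f w \<and> f w \<le> 1"
  shows "0 \<le> infsum (\<lambda>w. P x w * f w) {1..} \<and> infsum (\<lambda>w. P x w * f w) {1..} \<le> 1"
proof
  show "0 \<le> infsum (\<lambda>w. P x w * f w) {1..}"
    using assms Pnn by (intro infsum_nonneg) auto
  have "infsum (\<lambda>w. P x w * f w) {1..} \<le> infsum (P x) {1..}"
    using assms Pnn PF_summable Psummable by (intro infsum_mono) (auto intro: mult_left_le)
  also have "\<dots> = 1" using Prow[OF assms(1)] infsumI by blast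
  finally show "infsum (\<lambda>w. P x w * f w) {1..} \<le> 1" .
qed

lemma qq_bounds: "0 \<le> qq P b k x \<and> qq P b k x \<le> 1"
proof (induction k arbitrary: x)
  case 0 then show ?case by simp
next
  case (Suc k)
  show ?case
  proof (cases "x \<le> b")
    case False
    then have "x \<ge> 1" by simp
    then show ?thesis using PF_bounds[of x "qq P b k"] Suc False by simp
  qed simp
qed

lemma Pq_bounds: "x \<ge> 1 \<Longrightarrow> 0 \<le> Pq P b k x \<and> Pq P b k x \<le> 1"
  unfolding Pq_def using PF_bounds qq_bounds by blast

lemma Pq_summable: "x \<ge> 1 \<Longrightarrow> (\<lambda>w. P x w * qq P b k w) summable_on {1..}"
  using PF_summable qq_bounds by blast

lemma qq_Suc: "qq P b (Suc k) x = (if x \<le> b then 0 else Pq P b k x)"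
  by (simp add: Pq_def)

lemma term_le_infsum:
  fixes f :: "'a \<Rightarrow> real"
  assumes "f summable_on A" "\<And>x. x \<in> A \<Longrightarrow> f x \<ge> 0" "a \<in> A"
  shows "f a \<le> infsum f A"
  using finite_sum_le_infsum[OF assms(1), of "{a}"] assms by auto

end

locale mcpi = mc +
  fixes \<pi> :: "nat \<Rightarrow> real"
  assumes pipos: "\<And>i. i \<ge> 1 \<Longrightarrow> \<pi> i > 0"
    and pisum: "(\<pi> has_sum 1) {1..}"
    and pistat: "\<And>j. j \<ge> 1 \<Longrightarrow> ((\<lambda>i. \<pi> i * P i j) has_sum \<pi> j) {1..}"
begin

lemma piF_summable:
  assumes "\<And>w. w \<ge> 1 \<Longrightarrow> 0 \<le> f w \<and> f w \<le> 1"
  shows "(\<lambda>w. \<pi> w * f w) summable_on {1..}"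
  by (rule summable_on_comparison_test[of \<pi>])
     (use assms pipos pisum has_sum_imp_summable in \<open>auto intro: mult_nonneg_nonneg mult_left_le less_imp_le\<close>)

lemma piF_bounds:
  assumes "\<And>w. w \<ge> 1 \<Longrightarrow> 0 \<le> f w \<and> f w \<le> 1"
  shows "0 \<le> infsum (\<lambda>w. \<pi> w * f w) {1..} \<and> infsum (\<lambda>w. \<pi> w * f w) {1..} \<le> 1"
proof
  show "0 \<le> infsum (\<lambda>w. \<pi> w * f w) {1..}"
    using assms pipos by (intro infsum_nonneg) (auto intro!: mult_nonneg_nonneg intro: less_imp_le)
  have "infsum (\<lambda>w. \<pi> w * f w) {1..} \<le> infsum \<pi> {1..}"
    using assms pipos piF_summable pisum has_sum_imp_summable
    by (intro infsum_mono) (auto intro: mult_left_le less_imp_le)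
  also have "\<dots> = 1" using pisum infsumI by blast
  finally show "infsum (\<lambda>w. \<pi> w * f w) {1..} \<le> 1" .
qed

lemma key_ineq:
  assumes f: "\<And>w. w \<ge> 1 \<Longrightarrow> 0 \<le> f w \<and> f w \<le> 1"
  shows "infsum (\<lambda>x. \<pi> x * infsum (\<lambda>w. P x w * f w) {1..}) {1..} \<le> infsum (\<lambda>w. \<pi> w * f w) {1..}"
proof (rule infsum_le_finite_sums)
  show "(\<lambda>x. \<pi> x * infsum (\<lambda>w. P x w * f w) {1..}) summable_on {1..}"
    by (rule piF_summable) (use PF_bounds f in auto)
next
  fix X :: "nat set" assume X: "finite X" "X \<subseteq> {1..}"
  have "(\<Sum>x\<in>X. \<pi> x * infsum (\<lambda>w. P x w * f w) {1..}) = (\<Sum>x\<in>X. infsum (\<lambda>w. \<pi> x * (P x w * f w)) {1..})"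
    by (simp add: infsum_cmult_right')
  also have "\<dots> = infsum (\<lambda>w. \<Sum>x\<in>X. \<pi> x * (P x w * f w)) {1..}"
    using infsum_finite_sum[OF X(1), of "\<lambda>x w. \<pi> x * (P x w * f w)" "{1..}"]
      PF_summable f X summable_on_cmult_right by blast
  also have "\<dots> \<le> infsum (\<lambda>w. \<pi> w * f w) {1..}"
  proof (rule infsum_mono)
    show "(\<lambda>w. \<Sum>x\<in>X. \<pi> x * (P x w * f w)) summable_on {1..}"
      using infsum_finite_sum[OF X(1), of "\<lambda>x w. \<pi> x * (P x w * f w)" "{1..}"]
      PF_summable f X summable_on_cmult_right by blast
    show "(\<lambda>w. \<pi> w * f w) summable_on {1..}" using piF_summable f by blast
  next
    fix w :: nat assume w: "w \<in> {1..}"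
    have "(\<Sum>x\<in>X. \<pi> x * (P x w * f w)) = (\<Sum>x\<in>X. \<pi> x * P x w) * f w"
      by (simp add: sum_distrib_right mult.assoc)
    also have "\<dots> \<le> \<pi> w * f w"
    proof (rule mult_right_mono)
      show "(\<Sum>x\<in>X. \<pi> x * P x w) \<le> \<pi> w"
        by (rule finite_sum_le_has_sum[OF pistat]) (use w X pipos Pnn in \<open>auto intro!: mult_nonneg_nonneg intro: less_imp_le\<close>)
      show "0 \<le> f w" using f w by auto
    qed
    finally show "(\<Sum>x\<in>X. \<pi> x * (P x w * f w)) \<le> \<pi> w * f w" .
  qed
  finally show "(\<Sum>x\<in>X. \<pi> x * infsum (\<lambda>w. P x w * f w) {1..}) \<le> infsum (\<lambda>w. \<pi> w * f w) {1..}" .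
qed

definition aa :: "nat \<Rightarrow> nat \<Rightarrow> real" where
  "aa b k = infsum (\<lambda>x. \<pi> x * qq P b k x) {1..}"

definition dd :: "nat \<Rightarrow> nat \<Rightarrow> real" where
  "dd b k = (\<Sum>x\<in>{1..b}. \<pi> x * Pq P b k x)"

lemma aa_bounds: "0 \<le> aa b k \<and> aa b k \<le> 1"
  unfolding aa_def by (rule piF_bounds) (use qq_bounds in auto)

lemma dd_nn: "0 \<le> dd b k"
  unfolding dd_def using Pq_bounds pipos by (auto intro!: sum_nonneg mult_nonneg_nonneg intro: less_imp_le)

lemma aa_step: "aa b (Suc k) + dd b k \<le> aa b k"
proof -
  have U: "{1..} = {1..b} \<union> {Suc b..}" by auto
  have D: "{1..b} \<inter> {Suc b..} = {}" by auto
  have s1: "(\<lambda>x. \<pi> x * Pq P b k x) summable_on {1..}"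
    by (rule piF_summable) (use Pq_bounds in auto)
  have s1b: "(\<lambda>x. \<pi> x * Pq P b k x) summable_on {Suc b..}"
    by (rule summable_on_subset[OF s1]) auto
  have s2: "(\<lambda>x. \<pi> x * qq P b (Suc k) x) summable_on {1..}"
    by (rule piF_summable) (use qq_bounds in blast)
  have s2b: "(\<lambda>x. \<pi> x * qq P b (Suc k) x) summable_on {Suc b..}"
    by (rule summable_on_subset[OF s2]) auto
  have "aa b (Suc k) = infsum (\<lambda>x. \<pi> x * qq P b (Suc k) x) {1..b} + infsum (\<lambda>x. \<pi> x * qq P b (Suc k) x) {Suc b..}"
    unfolding aa_def by (subst U, rule infsum_Un_disjoint[OF _ s2b D]) simp
  also have "\<dots> = infsum (\<lambda>x. \<pi> x * Pq P b k x) {Suc b..}"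
    by (auto simp: Pq_def intro!: infsum_cong)
  finally have A1: "aa b (Suc k) = infsum (\<lambda>x. \<pi> x * Pq P b k x) {Suc b..}" .
  have "infsum (\<lambda>x. \<pi> x * Pq P b k x) {1..} = dd b k + infsum (\<lambda>x. \<pi> x * Pq P b k x) {Suc b..}"
    unfolding dd_def by (subst U, subst infsum_Un_disjoint[OF _ s1b D]) simp_all
  moreover have "infsum (\<lambda>x. \<pi> x * Pq P b k x) {1..} \<le> aa b k"
    unfolding aa_def Pq_def by (rule key_ineq) (use qq_bounds in auto)
  ultimately show ?thesis using A1 by simp
qed

lemma dd_lim: "dd b \<longlonglongrightarrow> 0"
proof -
  have tel: "(\<Sum>k<n. dd b k) \<le> aa b 0 - aa b n" for n
  proof (induction n)
    case (Suc n) then show ?case using aa_step[of b n] by simp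
  qed simp
  have "summable (dd b)"
  proof (rule summableI_nonneg_bounded)
    show "0 \<le> dd b k" for k by (rule dd_nn)
    show "(\<Sum>k<n. dd b k) \<le> 1" for n using tel[of n] aa_bounds[of b 0] aa_bounds[of b n] by simp
  qed
  then show ?thesis by (rule summable_LIMSEQ_zero)
qed

lemma Pq_base:
  assumes "x \<in> {1..b}"
  shows "(\<lambda>k. Pq P b k x) \<longlonglongrightarrow> 0"
proof (rule tendsto_sandwich[of "\<lambda>_. 0" _ _ "\<lambda>k. dd b k / \<pi> x"])
  have px: "\<pi> x > 0" using assms pipos by auto
  show "\<forall>\<^sub>F k in sequentially. 0 \<le> Pq P b k x" using Pq_bounds assms by auto
  show "\<forall>\<^sub>F k in sequentially. Pq P b k x \<le> dd b k / \<pi> x"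
  proof (rule always_eventually, rule allI)
    fix k
    have "\<pi> x * Pq P b k x \<le> dd b k"
      unfolding dd_def by (rule member_le_sum) (use assms Pq_bounds pipos in \<open>auto intro!: mult_nonneg_nonneg intro: less_imp_le\<close>)
    then show "Pq P b k x \<le> dd b k / \<pi> x" using px by (simp add: field_simps)
  qed
  show "(\<lambda>k. 0) \<longlonglongrightarrow> (0::real)" by simp
  show "(\<lambda>k. dd b k / \<pi> x) \<longlonglongrightarrow> 0" using tendsto_divide_zero[OF dd_lim] by simp
qed

definition RR :: "nat \<Rightarrow> nat \<Rightarrow> bool" where
  "RR b x \<longleftrightarrow> (\<lambda>k. Pq P b k x) \<longlonglongrightarrow> 0 \<and> (\<lambda>k. qq P b k x) \<longlonglongrightarrow> 0"

lemma RR_base: "x \<in> {1..b} \<Longrightarrow> RR b x"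
proof -
  assume x: "x \<in> {1..b}"
  have "qq P b k x = 0" for k using x by (cases k) auto
  then show ?thesis unfolding RR_def using Pq_base[OF x] by simp
qed

lemma RR_step:
  assumes "RR b x" "x \<ge> 1" "w \<ge> 1" "P x w > 0" "b \<ge> 1"
  shows "RR b w"
proof -
  have q: "(\<lambda>k. qq P b k w) \<longlonglongrightarrow> 0"
  proof (rule tendsto_sandwich[of "\<lambda>_. 0" _ _ "\<lambda>k. Pq P b k x / P x w"])
    show "\<forall>\<^sub>F k in sequentially. 0 \<le> qq P b k w" using qq_bounds by auto
    show "\<forall>\<^sub>F k in sequentially. qq P b k w \<le> Pq P b k x / P x w"
    proof (rule always_eventually, rule allI)
      fix k
      have "P x w * qq P b k w \<le> Pq P b k x"
        unfolding Pq_def by (rule term_le_infsum[OF Pq_summable]) (use assms Pnn qq_bounds in auto)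
      then show "qq P b k w \<le> Pq P b k x / P x w" using assms by (simp add: field_simps)
    qed
    show "(\<lambda>k. 0) \<longlonglongrightarrow> (0::real)" by simp
    show "(\<lambda>k. Pq P b k x / P x w) \<longlonglongrightarrow> 0"
      using tendsto_divide_zero[of "\<lambda>k. Pq P b k x"] assms(1) unfolding RR_def by simp
  qed
  show ?thesis
  proof (cases "w \<le> b")
    case True then show ?thesis using RR_base assms by auto
  next
    case False
    then have "(\<lambda>k. Pq P b k w) = (\<lambda>k. qq P b (Suc k) w)" by (simp add: Pq_def)
    then show ?thesis unfolding RR_def using q LIMSEQ_Suc[OF q] by simp
  qed
qed

lemma RR_kpow:
  assumes "b \<ge> 1"
  shows "kpow P n x z \<noteq> 0 \<Longrightarrow> RR b x \<Longrightarrow> x \<ge> 1 \<Longrightarrow> RR b z"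
proof (induction n arbitrary: x)
  case 0 then show ?case by (auto split: if_splits)
next
  case (Suc n)
  have "\<exists>w\<in>{1..}. P x w * kpow P n w z \<noteq> 0"
  proof (rule ccontr)
    assume "\<not> ?thesis"
    then have "infsum (\<lambda>w. P x w * kpow P n w z) {1..} = 0" by (intro infsum_0) auto
    then show False using Suc.prems by simp
  qed
  then obtain w where w: "w \<ge> 1" "P x w \<noteq> 0" "kpow P n w z \<noteq> 0" by auto
  have "P x w > 0" using w Pnn[of x w] Suc.prems by auto
  then have "RR b w" using RR_step Suc.prems w assms by blast
  then show ?case using Suc.IH w by blast
qed

lemma hh_approx:
  "x \<ge> 1 \<Longrightarrow> \<delta> > 0 \<Longrightarrow> eventually (\<lambda>N. hh P b N k x \<ge> 1 - qq P b k x - \<delta>) sequentially"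
proof (induction k arbitrary: x \<delta>)
  case 0 then show ?case by auto
next
  case (Suc k)
  show ?case
  proof (cases "x \<le> b")
    case True then show ?thesis using Suc.prems by simp
  next
    case xb: False
    define g where "g w = P x w * (1 - qq P b k w)" for w
    have h1: "(P x has_sum 1) {1..}" using Prow Suc.prems by simp
    have h2: "((\<lambda>w. -1 * (P x w * qq P b k w)) has_sum (-1 * Pq P b k x)) {1..}"
      unfolding Pq_def by (rule has_sum_cmult_right, rule has_sum_infsum, rule Pq_summable) (use Suc.prems in simp)
    have "((\<lambda>w. P x w + -1 * (P x w * qq P b k w)) has_sum (1 + -1 * Pq P b k x)) {1..}"
      by (rule has_sum_add[OF h1 h2])
    then have hg: "(g has_sum (1 - Pq P b k x)) {1..}"
      unfolding g_def by (simp add: algebra_simps)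
    have d2: "\<delta>/2 > 0" using Suc.prems by simp
    obtain F where F: "finite F" "F \<subseteq> {1..}" "dist (sum g F) (1 - Pq P b k x) \<le> \<delta>/2"
      using has_sum_finite_approximation[OF hg d2] by blast
    obtain M where M: "F \<subseteq> {..<M}" using F(1) finite_nat_bounded by blast
    have FM: "F \<subseteq> {1..<M}" using M F(2) by auto
    have gnn: "w \<ge> 1 \<Longrightarrow> g w \<ge> 0" for w
      unfolding g_def using Pnn[of x w] Suc.prems qq_bounds[of b k w] by simp
    have gF: "sum g F \<le> sum g {1..<M}"
      by (rule sum_mono2) (use FM gnn in auto)
    have ev1: "eventually (\<lambda>N. \<forall>w\<in>{1..<M}. hh P b N k w \<ge> 1 - qq P b k w - \<delta>/2) sequentially"
      by (rule eventually_ball_finite) (use Suc.IH d2 in auto)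
    have ev2: "eventually (\<lambda>N. N \<ge> max M (Suc x)) sequentially" by (rule eventually_ge_at_top)
    show ?thesis
      using ev1 ev2
    proof eventually_elim
      case (elim N)
      have "1 - qq P b (Suc k) x - \<delta> = 1 - Pq P b k x - \<delta>" using xb by (simp add: Pq_def)
      also have "\<dots> \<le> sum g F - \<delta>/2" using F(3) unfolding dist_real_def by linarith
      also have "\<dots> \<le> sum g {1..<M} - \<delta>/2 * (\<Sum>w\<in>{1..<M}. P x w)"
      proof -
        have "(\<Sum>w\<in>{1..<M}. P x w) \<le> 1" by (rule Psum_le1) (use Suc.prems in auto)
        then have "\<delta>/2 * (\<Sum>w\<in>{1..<M}. P x w) \<le> \<delta>/2" using d2 by (simp add: mult_left_le)
        then show ?thesis using gF by linarith
      qed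
      also have "\<dots> = (\<Sum>w\<in>{1..<M}. P x w * (1 - qq P b k w - \<delta>/2))"
        unfolding g_def by (simp add: algebra_simps sum_subtractf sum_distrib_left sum.distrib)
      also have "\<dots> \<le> (\<Sum>w\<in>{1..<M}. P x w * hh P b N k w)"
        using elim(1) Suc.prems Pnn by (intro sum_mono mult_left_mono) auto
      also have "\<dots> \<le> (\<Sum>w\<in>{1..<N}. P x w * hh P b N k w)"
        using elim(2) Suc.prems Pnn hh_nn by (intro sum_mono2) auto
      also have "\<dots> = hh P b N (Suc k) x" using xb elim(2) by simp
      finally show ?case .
    qed
  qed
qed

lemma key:
  assumes irr: "\<And>x y. x \<ge> 1 \<Longrightarrow> y \<ge> 1 \<Longrightarrow> \<exists>n. kpow P n x y > 0"
    and ab: "1 \<le> b" "b < a" and d: "\<delta> > 0"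
  shows "\<exists>K N0. \<forall>n\<ge>K. \<forall>N\<ge>N0. (1 - \<delta>) * surv P N n b \<le> surv P N n a"
proof -
  obtain m where m: "kpow P m 1 a > 0" using irr[of 1 a] ab by auto
  have "RR b 1" using RR_base ab by auto
  then have "RR b a" using RR_kpow[OF ab(1) _ _ _] m ab by (metis less_irrefl order.trans less_imp_le le_numeral_extra(4))
  then have "(\<lambda>k. qq P b k a) \<longlonglongrightarrow> 0" unfolding RR_def by simp
  then have "eventually (\<lambda>k. qq P b k a < \<delta>/2) sequentially"
    using d order_tendstoD(2)[of "\<lambda>k. qq P b k a" 0 sequentially "\<delta>/2"] by simp
  then obtain K where K: "qq P b K a < \<delta>/2" by (auto simp: eventually_sequentially)
  have "eventually (\<lambda>N. hh P b N K a \<ge> 1 - qq P b K a - \<delta>/2) sequentially"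
    using hh_approx[of a "\<delta>/2" b K] ab d by simp
  then obtain N0 where N0: "\<And>N. N \<ge> N0 \<Longrightarrow> hh P b N K a \<ge> 1 - qq P b K a - \<delta>/2"
    by (auto simp: eventually_sequentially)
  show ?thesis
  proof (intro exI allI impI)
    fix n N assume n: "K \<le> n" and N: "N0 \<le> N"
    have "(1 - \<delta>) * surv P N n b \<le> hh P b N K a * surv P N n b"
      using N0[OF N] K surv_nn[of b N n] ab by (intro mult_right_mono) auto
    also have "\<dots> \<le> surv P N n a" using lemA[OF ab(1) n] ab by simp
    finally show "(1 - \<delta>) * surv P N n b \<le> surv P N n a" .
  qed
qed

end

context mc
begin

lemma path:
  "kpow P m x z \<noteq> 0 \<Longrightarrow> x \<ge> 1 \<Longrightarrow> z \<ge> 1 \<Longrightarrow>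
   \<exists>N0. \<forall>N\<ge>N0. \<exists>c>0. \<forall>n. c * surv P N n z \<le> surv P N (n+m) x"
proof (induction m arbitrary: x)
  case 0
  then have "x = z" by (auto split: if_splits)
  then show ?case by (intro exI[of _ 0] allI impI exI[of _ 1]) auto
next
  case (Suc m)
  have "\<exists>w\<in>{1..}. P x w * kpow P m w z \<noteq> 0"
  proof (rule ccontr)
    assume "\<not> ?thesis"
    then have "infsum (\<lambda>w. P x w * kpow P m w z) {1..} = 0" by (intro infsum_0) auto
    then show False using Suc.prems by simp
  qed
  then obtain w where w: "w \<ge> 1" "P x w \<noteq> 0" "kpow P m w z \<noteq> 0" by auto
  have pw: "P x w > 0" using w Pnn[of x w] Suc.prems by auto
  obtain N0 where N0: "\<And>N. N \<ge> N0 \<Longrightarrow> \<exists>c>0. \<forall>n. c * surv P N n z \<le> surv P N (n+m) w"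
    using Suc.IH[OF w(3) w(1) Suc.prems(3)] by blast
  show ?case
  proof (intro exI[of _ "max N0 (Suc (max x w))"] allI impI)
    fix N assume N: "max N0 (Suc (max x w)) \<le> N"
    obtain c where c: "c > 0" "\<And>n. c * surv P N n z \<le> surv P N (n+m) w" using N0[of N] N by auto
    show "\<exists>c>0. \<forall>n. c * surv P N n z \<le> surv P N (n + Suc m) x"
    proof (intro exI[of _ "P x w * c"] conjI allI)
      show "P x w * c > 0" using pw c by simp
      fix n
      have "P x w * c * surv P N n z \<le> P x w * surv P N (n+m) w"
        using c(2)[of n] pw by (simp add: mult.assoc mult_left_mono)
      also have "\<dots> \<le> (\<Sum>v\<in>{1..<N}. P x v * surv P N (n+m) v)"
        by (rule member_le_sum[where f="\<lambda>v. P x v * surv P N (n+m) v"])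
           (use w N Suc.prems Pnn surv_nn in \<open>auto intro!: mult_nonneg_nonneg\<close>)
      also have "\<dots> = surv P N (n + Suc m) x" using N by (simp add: max_def split: if_splits)
      finally show "P x w * c * surv P N n z \<le> surv P N (n + Suc m) x" .
    qed
  qed
qed

lemma pos1:
  assumes irr: "\<And>x y. x \<ge> 1 \<Longrightarrow> y \<ge> 1 \<Longrightarrow> \<exists>n. kpow P n x y > 0"
  shows "\<exists>N0. \<forall>N\<ge>N0. \<forall>n. surv P N n 1 > 0"
proof -
  have "\<exists>w\<in>{1..}. P 1 w \<noteq> 0"
  proof (rule ccontr)
    assume "\<not> ?thesis"
    then have "infsum (P 1) {1..} = 0" by (intro infsum_0) auto
    then show False using Prow[of 1] infsumI by fastforce
  qed
  then obtain w where w: "w \<ge> 1" "P 1 w \<noteq> 0" by auto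
  have pw: "P 1 w > 0" using w Pnn[of 1 w] by auto
  obtain m where m: "kpow P m w 1 > 0" using irr[of w 1] w by auto
  obtain N0 where N0: "\<And>N. N \<ge> N0 \<Longrightarrow> \<exists>c>0. \<forall>n. c * surv P N n 1 \<le> surv P N (n+m) w"
    using path[of m w 1] m w by auto
  show ?thesis
  proof (intro exI[of _ "max N0 (Suc (max 1 w))"] allI impI)
    fix N n assume N: "max N0 (Suc (max 1 w)) \<le> N"
    obtain c where c: "c > 0" "\<And>n. c * surv P N n 1 \<le> surv P N (n+m) w" using N0[of N] N by auto
    define L where "L = Suc m"
    have step: "P 1 w * c * surv P N j 1 \<le> surv P N (j + L) 1" for j
    proof -
      have "P 1 w * c * surv P N j 1 \<le> P 1 w * surv P N (j+m) w"
        using c(2)[of j] pw by (simp add: mult.assoc mult_left_mono)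
      also have "\<dots> \<le> (\<Sum>v\<in>{1..<N}. P 1 v * surv P N (j+m) v)"
        by (rule member_le_sum[where f="\<lambda>v. P 1 v * surv P N (j+m) v"])
           (use w N Pnn surv_nn in \<open>auto intro!: mult_nonneg_nonneg\<close>)
      also have "\<dots> = surv P N (j + L) 1" using N by (simp add: L_def max_def split: if_splits)
      finally show ?thesis .
    qed
    have jL: "surv P N (j * L) 1 > 0" for j
    proof (induction j)
      case 0 then show ?case using N by (simp add: max_def split: if_splits)
    next
      case (Suc j)
      have "0 < P 1 w * c * surv P N (j * L) 1" using pw c Suc by simp
      also have "\<dots> \<le> surv P N (Suc j * L) 1" using step[of "j * L"] by (simp add: add.commute)
      finally show ?case .
    qed
    have "surv P N (n * L) 1 \<le> surv P N n 1" by (rule surv_dec) (auto simp: L_def)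
    then show "surv P N n 1 > 0" using jL[of n] by simp
  qed
qed

lemma pos:
  assumes irr: "\<And>x y. x \<ge> 1 \<Longrightarrow> y \<ge> 1 \<Longrightarrow> \<exists>n. kpow P n x y > 0"
    and z: "z \<ge> 1"
  shows "\<exists>N0. \<forall>N\<ge>N0. \<forall>n. surv P N n z > 0"
proof -
  obtain m where m: "kpow P m z 1 > 0" using irr[of z 1] z by auto
  obtain N1 where N1: "\<And>N. N \<ge> N1 \<Longrightarrow> \<exists>c>0. \<forall>n. c * surv P N n 1 \<le> surv P N (n+m) z"
    using path[of m z 1] m z by auto
  obtain N2 where N2: "\<And>N n. N \<ge> N2 \<Longrightarrow> surv P N n 1 > 0" using pos1[OF irr] by auto
  show ?thesis
  proof (intro exI[of _ "max N1 N2"] allI impI)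
    fix N n assume N: "max N1 N2 \<le> N"
    obtain c where c: "c > 0" "\<And>n. c * surv P N n 1 \<le> surv P N (n+m) z" using N1[of N] N by auto
    have "0 < c * surv P N n 1" using c N2[of N n] N by simp
    also have "\<dots> \<le> surv P N (n+m) z" by (rule c(2))
    also have "\<dots> \<le> surv P N n z" by (rule surv_dec) (use z in auto)
    finally show "surv P N n z > 0" .
  qed
qed

end

context mcpi
begin

lemma ratio_close:
  assumes irr: "\<And>x y. x \<ge> 1 \<Longrightarrow> y \<ge> 1 \<Longrightarrow> \<exists>n. kpow P n x y > 0"
    and y: "y \<ge> 1" and z: "z \<ge> 1" and e: "e > 0"
  shows "\<exists>K N0. \<forall>n\<ge>K. \<forall>N\<ge>N0. \<bar>surv P N n y / surv P N n z - 1\<bar> < e"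
proof -
  obtain Nz where Nz: "\<And>N n. N \<ge> Nz \<Longrightarrow> surv P N n z > 0" using pos[OF irr z] by auto
  obtain Ny where Ny: "\<And>N n. N \<ge> Ny \<Longrightarrow> surv P N n y > 0" using pos[OF irr y] by auto
  define \<delta> where "\<delta> = min (1/2) (e/4)"
  have d: "\<delta> > 0" "\<delta> \<le> 1/2" "\<delta> \<le> e/4" using e unfolding \<delta>_def by auto
  consider "y = z" | "y < z" | "z < y" by linarith
  then show ?thesis
  proof cases
    case 1
    show ?thesis
      by (intro exI[of _ 0] exI[of _ Nz] allI impI) (use Nz e 1 in \<open>auto dest!: Nz[where n=n for n] simp: less_le\<close>)
  next
    case 2
    obtain K N0 where K: "\<And>n N. n \<ge> K \<Longrightarrow> N \<ge> N0 \<Longrightarrow> (1 - \<delta>) * surv P N n y \<le> surv P N n z"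
      using key[OF irr y 2 d(1)] by blast
    show ?thesis
    proof (rule exI[of _ K], rule exI[of _ "max N0 Nz"], intro allI impI)
      fix n N assume n: "K \<le> n" and N: "max N0 Nz \<le> N"
      define sy where "sy = surv P N n y"
      define sz where "sz = surv P N n z"
      have pz: "sz > 0" using Nz N unfolding sz_def by simp
      have le: "sz \<le> sy" unfolding sy_def sz_def using surv_mono[of y z N n] y 2 by simp
      have k: "(1 - \<delta>) * sy \<le> sz" using K[OF n] N unfolding sy_def sz_def by simp
      have "(1/2) * sy \<le> (1 - \<delta>) * sy" using d le pz by (intro mult_right_mono) auto
      then have s2: "sy \<le> 2 * sz" using k by linarith
      have "sy - sz \<le> \<delta> * sy" using k by (simp add: algebra_simps)
      also have "\<dots> \<le> \<delta> * (2 * sz)" using s2 d by (intro mult_left_mono) auto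
      also have "\<dots> = (2 * \<delta>) * sz" by simp
      also have "\<dots> < e * sz" using d pz e by (intro mult_strict_right_mono) auto
      finally have "sy - sz < e * sz" .
      then have "\<bar>sy / sz - 1\<bar> < e" using le pz e by (simp add: field_simps abs_if)
      then show "\<bar>surv P N n y / surv P N n z - 1\<bar> < e" by (simp add: sy_def sz_def)
    qed
  next
    case 3
    obtain K N0 where K: "\<And>n N. n \<ge> K \<Longrightarrow> N \<ge> N0 \<Longrightarrow> (1 - \<delta>) * surv P N n z \<le> surv P N n y"
      using key[OF irr z 3 d(1)] by blast
    show ?thesis
    proof (rule exI[of _ K], rule exI[of _ "max N0 Nz"], intro allI impI)
      fix n N assume n: "K \<le> n" and N: "max N0 Nz \<le> N"
      define sy where "sy = surv P N n y"
      define sz where "sz = surv P N n z"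
      have pz: "sz > 0" using Nz N unfolding sz_def by simp
      have le: "sy \<le> sz" unfolding sy_def sz_def using surv_mono[of z y N n] z 3 by simp
      have k: "(1 - \<delta>) * sz \<le> sy" using K[OF n] N unfolding sy_def sz_def by simp
      have "sz - sy \<le> \<delta> * sz" using k by (simp add: algebra_simps)
      also have "\<dots> < e * sz" using d pz e by (intro mult_strict_right_mono) auto
      finally have "sz - sy < e * sz" .
      then have "\<bar>sy / sz - 1\<bar> < e" using le pz e by (simp add: field_simps abs_if)
      then show "\<bar>surv P N n y / surv P N n z - 1\<bar> < e" by (simp add: sy_def sz_def)
    qed
  qed
qed

end

theorem lemma2:
  fixes P :: "nat \<Rightarrow> nat \<Rightarrow> real" and \<pi> :: "nat \<Rightarrow> real"
  assumes "stochastic_kernel P"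
    and "monotone_kernel P"
    and "irreducible_kernel P"
    and "positive_recurrent P"
    and "stationary_distribution P \<pi>"
  shows "\<forall>y\<ge>1. \<forall>z\<ge>1.
           ((\<lambda>(n, N). surv P N n y / surv P N n z) \<longlongrightarrow> 1) (at_top \<times>\<^sub>F at_top)"
proof -
  interpret mcpi P \<pi>
    using assms(1,2,5) unfolding stochastic_kernel_def monotone_kernel_def stationary_distribution_def
    by unfold_locales auto
  have irr: "\<And>x y. x \<ge> 1 \<Longrightarrow> y \<ge> 1 \<Longrightarrow> \<exists>n. kpow P n x y > 0"
    using assms(3) unfolding irreducible_kernel_def by auto
  show ?thesis
  proof (intro allI impI)
    fix y z :: nat assume y: "y \<ge> 1" and z: "z \<ge> 1"
    show "((\<lambda>(n, N). surv P N n y / surv P N n z) \<longlongrightarrow> 1) (at_top \<times>\<^sub>F at_top)"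
    proof (rule tendstoI)
      fix e :: real assume e: "e > 0"
      obtain K N0 where K: "\<And>n N. n \<ge> K \<Longrightarrow> N \<ge> N0 \<Longrightarrow> \<bar>surv P N n y / surv P N n z - 1\<bar> < e"
        using ratio_close[OF irr y z e] by blast
      show "\<forall>\<^sub>F x in at_top \<times>\<^sub>F at_top. dist ((\<lambda>(n, N). surv P N n y / surv P N n z) x) 1 < e"
        unfolding eventually_prod_filter
        by (intro exI[of _ "\<lambda>n. n \<ge> K"] exI[of _ "\<lambda>N. N \<ge> N0"])
           (auto simp: dist_real_def K eventually_ge_at_top)
    qed
  qed
qed

end
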